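(* The calculus $\lambda_{\parallel}$ terminates: if $\Gamma\vdash M:\alpha$ in $\lambda_{\parallel}$, then there is no infinite reduction sequence $M\to M_1\to M_2\to\cdots$.
   Context: Terms are considered up to $\alpha$-renaming; $[V/x]M$ is capture-avoiding substitution. The parallel call-by-value $\lambda$-calculus $\lambda_{\parallel}$: values $V::=*\mid\lambda x.M\mid x$; terms $M::=V\mid MM\mid (M\mid M)$; evaluation contexts $E::=[\,]\mid E[[\,]M]\mid E[V[\,]]\mid E[[\,]\mid M]\mid E[M\mid[\,]]$; value types $A::=1\mid A\to\alpha$; types $\alpha::=A\mid b$ ($b$ a distinguished behavior type). Reduction: $E[(\lambda x.M)V]\to E[[V/x]M]$. Typing ($\Gamma$ a finite map from variables to value types): $\Gamma\vdash x:A$ if $x:A\in\Gamma$; $\Gamma\vdash *:1$; $\Gamma\vdash\lambda x.M:A\to\alpha$ if $\Gamma,x:A\vdash M:\alpha$; $\Gamma\vdash MN:\alpha$ if $\Gamma\vdash M:A\to\alpha$ and $\Gamma\vdash N:A$; $\Gamma\vdash (M_1\mid M_2):b$ if $\Gamma\vdash M_i:b$ for $i=1,2$. *)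

theory Defs
  imports Main
begin

text \<open>Terms of the parallel call-by-value lambda calculus, with de Bruijn indices
  (so terms are identified up to alpha-renaming by construction).\<close>

datatype trm = Var nat | Star | Lam trm | App trm trm | Par trm trm

fun is_val :: "trm \<Rightarrow> bool" where
  "is_val (Var i) = True"
| "is_val Star = True"
| "is_val (Lam M) = True"
| "is_val (App M N) = False"
| "is_val (Par M N) = False"

fun lift :: "nat \<Rightarrow> trm \<Rightarrow> trm" where
  "lift k (Var i) = (if i < k then Var i else Var (Suc i))"
| "lift k Star = Star"
| "lift k (Lam M) = Lam (lift (Suc k) M)"
| "lift k (App M N) = App (lift k M) (lift k N)"
| "lift k (Par M N) = Par (lift k M) (lift k N)"

text \<open>Capture-avoiding substitution \<open>subst M k s\<close> = [s/k]M (removing index k).\<close>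
fun subst :: "trm \<Rightarrow> nat \<Rightarrow> trm \<Rightarrow> trm" where
  "subst (Var i) k s = (if k < i then Var (i - 1) else if i = k then s else Var i)"
| "subst Star k s = Star"
| "subst (Lam M) k s = Lam (subst M (Suc k) (lift 0 s))"
| "subst (App M N) k s = App (subst M k s) (subst N k s)"
| "subst (Par M N) k s = Par (subst M k s) (subst N k s)"

text \<open>One-step reduction E[(\<lambda>x.M)V] \<rightarrow> E[[V/x]M], with the evaluation contexts
  E ::= [] | E[[] M] | E[V []] | E[[] | M] | E[M | []].\<close>
inductive red :: "trm \<Rightarrow> trm \<Rightarrow> bool" where
  beta: "is_val V \<Longrightarrow> red (App (Lam M) V) (subst M 0 V)"
| appL: "red M M' \<Longrightarrow> red (App M N) (App M' N)"
| appR: "is_val V \<Longrightarrow> red N N' \<Longrightarrow> red (App V N) (App V N')"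
| parL: "red M M' \<Longrightarrow> red (Par M N) (Par M' N)"
| parR: "red N N' \<Longrightarrow> red (Par M N) (Par M N')"

datatype vty = One | Arr vty ty
     and ty = VT vty | Beh

inductive typing :: "vty list \<Rightarrow> trm \<Rightarrow> ty \<Rightarrow> bool" where
  t_var: "i < length \<Gamma> \<Longrightarrow> \<Gamma> ! i = A \<Longrightarrow> typing \<Gamma> (Var i) (VT A)"
| t_star: "typing \<Gamma> Star (VT One)"
| t_lam: "typing (A # \<Gamma>) M \<alpha> \<Longrightarrow> typing \<Gamma> (Lam M) (VT (Arr A \<alpha>))"
| t_app: "typing \<Gamma> M (VT (Arr A \<alpha>)) \<Longrightarrow> typing \<Gamma> N (VT A) \<Longrightarrow> typing \<Gamma> (App M N) \<alpha>"
| t_par: "typing \<Gamma> M Beh \<Longrightarrow> typing \<Gamma> N Beh \<Longrightarrow> typing \<Gamma> (Par M N) Beh"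

end

theory Submission
  imports Defs
begin

inductive SN :: "trm \<Rightarrow> bool" where
  SNI: "(\<And>N. red M N \<Longrightarrow> SN N) \<Longrightarrow> SN M"

lemma SN_noinf: "SN M \<Longrightarrow> \<forall>f. f 0 = M \<longrightarrow> \<not> (\<forall>n. red (f n) (f (Suc n)))"
proof (induction rule: SN.induct)
  case (SNI M)
  show ?case
  proof (intro allI impI notI)
    fix f assume f0: "f 0 = M" and r: "\<forall>n. red (f n) (f (Suc n))"
    have "red M (f 1)" using r f0 by (metis One_nat_def)
    with SNI.IH have "\<forall>g. g 0 = f 1 \<longrightarrow> \<not> (\<forall>n. red (g n) (g (Suc n)))" by blast
    from this[rule_format, of "\<lambda>n. f (Suc n)"] r show False by simp
  qed
qed

lemma val_nored: "red V N \<Longrightarrow> is_val V \<Longrightarrow> False"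
  by (induction rule: red.induct) auto

lemma SN_val: "is_val V \<Longrightarrow> SN V"
  by (rule SNI) (auto dest: val_nored)

lemma SN_red: "SN M \<Longrightarrow> red M N \<Longrightarrow> SN N"
  by (erule SN.cases) auto

fun RV :: "vty \<Rightarrow> trm \<Rightarrow> bool" and RT :: "ty \<Rightarrow> trm \<Rightarrow> bool" where
  "RV One V = True"
| "RV (Arr A \<alpha>) V = (\<forall>W. is_val W \<longrightarrow> RV A W \<longrightarrow> RT \<alpha> (App V W))"
| "RT (VT A) M = (SN M \<and> (\<forall>N. red\<^sup>*\<^sup>* M N \<longrightarrow> is_val N \<longrightarrow> RV A N))"
| "RT Beh M = SN M"

lemma P1: "RT \<alpha> M \<Longrightarrow> SN M"
  by (cases \<alpha>) auto

lemma P2: "RT \<alpha> M \<Longrightarrow> red M M' \<Longrightarrow> RT \<alpha> M'"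
  by (cases \<alpha>) (auto intro: SN_red converse_rtranclp_into_rtranclp)

lemma P3:
  assumes "\<not> is_val M" "\<And>M'. red M M' \<Longrightarrow> RT \<alpha> M'"
  shows "RT \<alpha> M"
proof -
  have sn: "SN M" by (rule SNI) (use assms P1 in blast)
  show ?thesis
  proof (cases \<alpha>)
    case (VT A)
    have "RV A N" if "red\<^sup>*\<^sup>* M N" "is_val N" for N
      using that(1)
    proof (cases rule: converse_rtranclpE)
      case base thus ?thesis using assms(1) that(2) by simp
    next
      case (step M')
      then show ?thesis using assms(2)[of M'] VT that(2) by auto
    qed
    thus ?thesis using sn VT by simp
  next
    case Beh thus ?thesis using sn by simp
  qed
qed

lemma val_rtr: "red\<^sup>*\<^sup>* V N \<Longrightarrow> is_val V \<Longrightarrow> N = V"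
  by (erule converse_rtranclpE) (auto dest: val_nored)

lemma P4: "is_val V \<Longrightarrow> RT (VT A) V = RV A V"
  using SN_val val_rtr by auto

lemma app_var_nored: "red (App (Var i) W) X \<Longrightarrow> is_val W \<Longrightarrow> False"
  by (erule red.cases) (auto dest: val_nored)

lemma P5: "RV A (Var i)"
proof (cases A)
  case One thus ?thesis by simp
next
  case (Arr B \<alpha>)
  have "RT \<alpha> (App (Var i) W)" if "is_val W" for W
    by (rule P3) (use that app_var_nored in auto)
  thus ?thesis using Arr by simp
qed

lemma app_lemma:
  "SN M \<Longrightarrow> \<forall>N. SN N \<longrightarrow> RT (VT (Arr A \<alpha>)) M \<longrightarrow> RT (VT A) N \<longrightarrow> RT \<alpha> (App M N)"
proof (induction M rule: SN.induct)
  case (SNI M)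
  note outer = SNI.IH
  show ?case
  proof (intro allI impI)
    fix N assume "SN N"
    then show "RT (VT (Arr A \<alpha>)) M \<Longrightarrow> RT (VT A) N \<Longrightarrow> RT \<alpha> (App M N)"
    proof (induction N rule: SN.induct)
      case (SNI N)
      have snN: "SN N" using SNI.hyps by (blast intro: SN.SNI)
      show ?case
      proof (rule P3)
        fix X assume rX: "red (App M N) X"
        then show "RT \<alpha> X"
        proof (cases rule: red.cases)
          case (beta b)
          have "RV (Arr A \<alpha>) M" using P4[of M] SNI.prems beta by simp
          moreover have "RV A N" using P4[of N] SNI.prems beta by simp
          ultimately have "RT \<alpha> (App M N)" using beta by simp
          thus ?thesis using P2 rX by blast
        next
          case (appL M')
          thus ?thesis using SNI.prems P2 outer[of M'] snN by blast
        next
          case (appR N')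
          thus ?thesis using SNI.prems P2 SNI.IH by blast
        qed
      qed simp
    qed
  qed
qed

lemma par_lemma: "SN M \<Longrightarrow> \<forall>N. SN N \<longrightarrow> SN (Par M N)"
proof (induction M rule: SN.induct)
  case (SNI M)
  note outer = SNI.IH
  show ?case
  proof (intro allI impI)
    fix N assume "SN N"
    then show "SN (Par M N)"
    proof (induction N rule: SN.induct)
      case (SNI N)
      have snN: "SN N" using SNI.hyps by (blast intro: SN.SNI)
      show ?case
      proof (rule SN.SNI)
        fix X assume "red (Par M N) X"
        then show "SN X"
          by (cases rule: red.cases) (use SNI.IH outer snN in \<open>blast+\<close>)
      qed
    qed
  qed
qed

fun ext :: "(nat \<Rightarrow> trm) \<Rightarrow> nat \<Rightarrow> trm" where
  "ext \<sigma> 0 = Var 0"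
| "ext \<sigma> (Suc j) = lift 0 (\<sigma> j)"

fun scons :: "trm \<Rightarrow> (nat \<Rightarrow> trm) \<Rightarrow> nat \<Rightarrow> trm" where
  "scons W \<sigma> 0 = W"
| "scons W \<sigma> (Suc j) = \<sigma> j"

fun msubst :: "(nat \<Rightarrow> trm) \<Rightarrow> trm \<Rightarrow> trm" where
  "msubst \<sigma> (Var i) = \<sigma> i"
| "msubst \<sigma> Star = Star"
| "msubst \<sigma> (Lam M) = Lam (msubst (ext \<sigma>) M)"
| "msubst \<sigma> (App M N) = App (msubst \<sigma> M) (msubst \<sigma> N)"
| "msubst \<sigma> (Par M N) = Par (msubst \<sigma> M) (msubst \<sigma> N)"

lemma ext_Var: "ext Var = Var"
proof
  fix i show "ext Var i = Var i" by (cases i) auto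
qed

lemma msubst_Var: "msubst Var M = M"
  by (induction M) (auto simp: ext_Var)

lemma lift_lift: "i < Suc k \<Longrightarrow> lift (Suc k) (lift i t) = lift i (lift k t)"
  by (induction t arbitrary: i k) auto

lemma subst_lift: "subst (lift k t) k s = t"
  by (induction t arbitrary: k s) auto

lemma liftn_Var0: "(lift 0 ^^ k) (Var 0) = Var k"
  by (induction k) auto

lemma liftn_lift: "(lift 0 ^^ k) (lift 0 t) = lift k ((lift 0 ^^ k) t)"
proof (induction k)
  case 0 thus ?case by simp
next
  case (Suc k) thus ?case using lift_lift[of 0 k] by simp
qed

lemma extn: "(ext ^^ k) \<tau> i = (if i < k then Var i else (lift 0 ^^ k) (\<tau> (i - k)))"
proof (induction k arbitrary: i)
  case 0 thus ?case by simp
next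
  case (Suc k)
  show ?case
  proof (cases i)
    case 0 thus ?thesis by simp
  next
    case (Suc j) thus ?thesis using Suc.IH[of j] by auto
  qed
qed

lemma subst_msubst_gen:
  "subst (msubst ((ext ^^ k) (ext \<sigma>)) b) k ((lift 0 ^^ k) W) = msubst ((ext ^^ k) (scons W \<sigma>)) b"
proof (induction b arbitrary: k)
  case (Var i)
  show ?case
  proof (cases "i < k")
    case True thus ?thesis by (simp add: extn)
  next
    case False
    show ?thesis
    proof (cases "i = k")
      case True thus ?thesis by (simp add: extn liftn_Var0)
    next
      case False2: False
      then obtain j where j: "i - k = Suc j" using False by (metis Suc_diff_Suc not_less_iff_gr_or_eq)
      show ?thesis using False False2 j by (simp add: extn liftn_lift subst_lift)
    qed
  qed
next
  case (Lam b)
  show ?case using Lam.IH[of "Suc k"] by simp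
qed auto

lemma subst_msubst: "subst (msubst (ext \<sigma>) b) 0 W = msubst (scons W \<sigma>) b"
  using subst_msubst_gen[of 0 \<sigma> b W] by simp

lemma red_app_lam: "red (App (Lam c) W) X \<Longrightarrow> is_val W \<Longrightarrow> X = subst c 0 W"
  by (erule red.cases) (auto dest: val_nored)

lemma fundamental:
  "typing \<Gamma> M \<alpha> \<Longrightarrow> \<forall>\<sigma>. (\<forall>i<length \<Gamma>. is_val (\<sigma> i) \<and> RV (\<Gamma>!i) (\<sigma> i)) \<longrightarrow> RT \<alpha> (msubst \<sigma> M)"
proof (induction rule: typing.induct)
  case (t_var i \<Gamma> A)
  thus ?case using P4 by auto
next
  case (t_star \<Gamma>)
  thus ?case using P4[of Star One] by simp
next
  case (t_lam A \<Gamma> M \<alpha>)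
  show ?case
  proof (intro allI impI)
    fix \<sigma> assume env: "\<forall>i<length \<Gamma>. is_val (\<sigma> i) \<and> RV (\<Gamma>!i) (\<sigma> i)"
    have "RV (Arr A \<alpha>) (Lam (msubst (ext \<sigma>) M))"
    proof (simp only: RV.simps, intro allI impI)
      fix W assume W: "is_val W" "RV A W"
      have env2: "\<forall>i<length (A#\<Gamma>). is_val (scons W \<sigma> i) \<and> RV ((A#\<Gamma>)!i) (scons W \<sigma> i)"
        using env W by (auto simp: less_Suc_eq_0_disj)
      show "RT \<alpha> (App (Lam (msubst (ext \<sigma>) M)) W)"
      proof (rule P3)
        fix X assume "red (App (Lam (msubst (ext \<sigma>) M)) W) X"
        hence "X = msubst (scons W \<sigma>) M" using red_app_lam W subst_msubst by blast
        thus "RT \<alpha> X" using t_lam.IH env2 by blast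
      qed simp
    qed
    thus "RT (VT (Arr A \<alpha>)) (msubst \<sigma> (Lam M))"
      using P4[of "Lam (msubst (ext \<sigma>) M)" "Arr A \<alpha>"] by (simp del: RT.simps RV.simps)
  qed
next
  case (t_app \<Gamma> M A \<alpha> N)
  thus ?case using app_lemma P1 by (metis msubst.simps(4))
next
  case (t_par \<Gamma> M N)
  thus ?case using par_lemma by simp
qed

theorem proposition1:
  assumes "typing \<Gamma> M \<alpha>"
  shows "\<not> (\<exists>f. f 0 = M \<and> (\<forall>n. red (f n) (f (Suc n))))"
proof -
  have "RT \<alpha> (msubst Var M)"
    using fundamental[OF assms] P5 by simp
  hence "SN M" using P1 msubst_Var by simp
  thus ?thesis using SN_noinf by blast
qed

end
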